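(* Assume (A1), (A2), (A4). Then $\hat J_1$ restricted to $W_{ad}^\rho\times\Xi$ is a Carathéodory function, and there exists an integrable random variable $h:\Xi\to[0,\infty)$ with $\hat J_1(u,\xi)\le h(\xi)$ for all $u\in W_{ad}^\rho$ and all $\xi\in\Xi$.
   Context: Standing setting. $U$ is a real separable Hilbert space (identified with its dual), $Y$, $Z$, $V$ are real separable Banach spaces. $\Xi$ is a complete separable metric space; $\xi$ is a $\Xi$-valued random element. Carathéodory means continuous in the first argument and measurable in the second. $\mathbb E$ denotes expectation w.r.t. the law of $\xi$. For proper convex lsc $\chi:U\to(-\infty,\infty]$, $\operatorname{prox}_\chi(v)=\arg\min_{w\in U}\chi(w)+\frac12\|v-w\|_U^2$; $\overline{A}^{\|\cdot\|_U}$ is the norm closure. (A1) $J_1:Y\times\Xi\to[0,\infty)$ is Carathéodory and $J_1(\cdot,\xi)$ is continuously differentiable for all $\xi$; $\alpha>0$; $\psi:U\to[0,\infty]$ is proper, convex, lower semicontinuous. (A2) $E:Y\times U\times\Xi\to Z$ is Carathéodory, $E(\cdot,\cdot,\xi)$ is continuously differentiable; for each $(u,\xi)$, $S(u,\xi)$ is the unique $y\in Y$ with $E(y,u,\xi)=0$; $E_y(S(u,\xi),u,\xi)$ has a bounded inverse. Definitions: $\hat J_1(u,\xi)=J_1(S(u,\xi),\xi)$, $\hat J(u,\xi)=\hat J_1(u,\xi)+\psi(u)+(\alpha/2)\|u\|_U^2$, $U_{ad}=\{u\in U:\psi(u)<\infty\}$. Fix $u_0\in U_{ad}$ with $\mathbb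 E[\hat J(u_0,\xi)]<\infty$ and $\rho\in(0,\infty)$; $V_{ad}^\rho(u_0)=\{u\in U_{ad}:(\alpha/2)\|u\|_U^2\le \mathbb E[\hat J(u_0,\xi)]+\rho\}$. (A4) $K:V\to U$ is linear and compact; $B\subset U$ is a bounded, convex, open set containing $V_{ad}^\rho(u_0)$; $M:U\times\Xi\to V$ is Carathéodory with $\nabla_u\hat J_1(u,\xi)=K[M(u,\xi)]$ for all $(u,\xi)$; there is an integrable $\zeta:\Xi\to[0,\infty)$ with $\|M(u,\xi)\|_V\le\zeta(\xi)$ for all $(u,\xi)\in B\times\Xi$. $W_{ad}^\rho=V_{ad}^\rho(u_0)\cap\overline{\{\operatorname{prox}_{\psi/\alpha}(-(1/\alpha)K[v]):v\in V,\ \|v\|_V\le\mathbb E[\zeta(\xi)]+\rho\}}^{\|\cdot\|_U}$. *)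

theory Defs
  imports "HOL-Analysis.Analysis" "HOL-Probability.Probability"
begin

definition convex_enn :: "('a::real_vector \<Rightarrow> ennreal) \<Rightarrow> bool" where
  "convex_enn f \<longleftrightarrow> (\<forall>x y. \<forall>t::real. 0 \<le> t \<and> t \<le> 1 \<longrightarrow>
      f ((1 - t) *\<^sub>R x + t *\<^sub>R y) \<le> ennreal (1 - t) * f x + ennreal t * f y)"

definition lsc_enn :: "('a::topological_space \<Rightarrow> ennreal) \<Rightarrow> bool" where
  "lsc_enn f \<longleftrightarrow> (\<forall>c. closed {x. f x \<le> c})"

definition proper_enn :: "('a \<Rightarrow> ennreal) \<Rightarrow> bool" where
  "proper_enn f \<longleftrightarrow> (\<exists>x. f x < \<infinity>)"

definition prox_enn :: "('a::real_inner \<Rightarrow> ennreal) \<Rightarrow> 'a \<Rightarrow> 'a" where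
  "prox_enn f v = (SOME w. \<forall>w'. f w + ennreal ((1/2) * (norm (v - w))\<^sup>2)
                                 \<le> f w' + ennreal ((1/2) * (norm (v - w'))\<^sup>2))"

definition compact_operator :: "('a::real_normed_vector \<Rightarrow> 'b::real_normed_vector) \<Rightarrow> bool" where
  "compact_operator K \<longleftrightarrow> linear K \<and> (\<forall>S. bounded S \<longrightarrow> compact (closure (K ` S)))"

end

theory Submission imports Defs begin
lemma deriv_dq_tendsto:
  fixes f :: "'y::real_normed_vector \<Rightarrow> 'z::real_normed_vector"
  assumes d: "(f has_derivative A) (at y)"
  shows "(\<lambda>n. real (Suc n) *\<^sub>R (f (y + inverse (real (Suc n)) *\<^sub>R h) - f y)) \<longlonglongrightarrow> A h"
proof (cases "h = 0")
  case True
  have "A 0 = 0" using d has_derivative_bounded_linear linear_simps(3) bounded_linear.linear by blast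
  then show ?thesis using True by simp
next
  case False
  have bl: "bounded_linear A" using d has_derivative_bounded_linear by blast
  from d have lim: "((\<lambda>k. norm (f (y + k) - f y - A k) / norm k) \<longlongrightarrow> 0) (at 0)"
    unfolding has_derivative_at by blast
  define k where "k n = inverse (real (Suc n)) *\<^sub>R h" for n
  have k0: "k \<longlonglongrightarrow> 0" unfolding k_def
    using tendsto_scaleR[OF LIMSEQ_inverse_real_of_nat tendsto_const, of h] by simp
  have kne: "k n \<noteq> 0" for n using False unfolding k_def by simp
  have kat: "filterlim k (at 0) sequentially"
    using k0 kne by (simp add: filterlim_at eventually_sequentially)
  have l2: "(\<lambda>n. norm (f (y + k n) - f y - A (k n)) / norm (k n)) \<longlonglongrightarrow> 0"
    using filterlim_compose[OF lim kat] by (simp add: o_def)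
  have eq: "norm (real (Suc n) *\<^sub>R (f (y + k n) - f y) - A h)
      = norm h * (norm (f (y + k n) - f y - A (k n)) / norm (k n))" for n
  proof -
    define v where "v = f (y + k n) - f y - A (k n)"
    have Akn: "A (k n) = inverse (real (Suc n)) *\<^sub>R A h" unfolding k_def
      using bl by (simp add: linear_scale[OF bounded_linear.linear])
    then have Ah: "A h = real (Suc n) *\<^sub>R A (k n)" by simp
    have e1: "real (Suc n) *\<^sub>R (f (y + k n) - f y) - A h = real (Suc n) *\<^sub>R v"
      unfolding v_def Ah by (simp only: scaleR_diff_right)
    have nk: "norm (k n) = norm h / real (Suc n)" unfolding k_def by (simp add: divide_inverse mult.commute)
    have e3: "norm h * (norm v / (norm h / real (Suc n))) = real (Suc n) * norm v"
      using False by simp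
    show ?thesis unfolding e1 nk v_def[symmetric] e3 by simp
  qed
  have "(\<lambda>n. norm (real (Suc n) *\<^sub>R (f (y + k n) - f y) - A h)) \<longlonglongrightarrow> 0"
    unfolding eq using tendsto_mult_right_zero[OF l2] by simp
  then have "(\<lambda>n. real (Suc n) *\<^sub>R (f (y + k n) - f y) - A h) \<longlonglongrightarrow> 0"
    by (rule tendsto_norm_zero_cancel)
  then show ?thesis unfolding k_def by (rule LIM_zero_cancel)
qed

lemma deriv_meas:
  fixes f :: "'x \<Rightarrow> 'y::real_normed_vector \<Rightarrow> 'z::{real_normed_vector,second_countable_topology}"
  assumes d: "\<And>\<xi>. (f \<xi> has_derivative blinfun_apply (A \<xi>)) (at y)"
    and m: "\<And>z. (\<lambda>\<xi>. f \<xi> z) \<in> borel_measurable M"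
  shows "(\<lambda>\<xi>. blinfun_apply (A \<xi>) h) \<in> borel_measurable M"
proof (rule borel_measurable_LIMSEQ_metric)
  fix n show "(\<lambda>\<xi>. real (Suc n) *\<^sub>R (f \<xi> (y + inverse (real (Suc n)) *\<^sub>R h) - f \<xi> y)) \<in> borel_measurable M"
    using m by measurable
next
  fix \<xi> show "(\<lambda>n. real (Suc n) *\<^sub>R (f \<xi> (y + inverse (real (Suc n)) *\<^sub>R h) - f \<xi> y)) \<longlonglongrightarrow> blinfun_apply (A \<xi>) h"
    by (rule deriv_dq_tendsto[OF d])
qed

locale impl_meas =
  fixes F :: "'x \<Rightarrow> 'y::{banach,second_countable_topology} \<Rightarrow> 'z::{banach,second_countable_topology}"
    and A :: "'x \<Rightarrow> 'y \<Rightarrow> ('y \<Rightarrow>\<^sub>L 'z)"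
    and s :: "'x \<Rightarrow> 'y"
    and M :: "'x measure"
    and dY :: "nat \<Rightarrow> 'y" and dZ :: "nat \<Rightarrow> 'z"
  assumes F_deriv: "\<And>\<xi> y. (F \<xi> has_derivative blinfun_apply (A \<xi> y)) (at y)"
    and A_cont: "\<And>\<xi>. continuous_on UNIV (A \<xi>)"
    and F_meas: "\<And>y. (\<lambda>\<xi>. F \<xi> y) \<in> borel_measurable M"
    and s_zero: "\<And>\<xi>. F \<xi> (s \<xi>) = 0"
    and s_unique: "\<And>\<xi> y. F \<xi> y = 0 \<Longrightarrow> y = s \<xi>"
    and A_inv: "\<And>\<xi>. \<exists>L::'z \<Rightarrow>\<^sub>L 'y. (\<forall>y. L (A \<xi> (s \<xi>) y) = y) \<and> (\<forall>z. A \<xi> (s \<xi>) (L z) = z)"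
    and dY_dense: "closure (range dY) = UNIV"
    and dZ_dense: "closure (range dZ) = UNIV"
begin

lemma FC_sound:
  fixes m r :: real
  assumes m: "m > 0" and r: "r > 0"
    and lb: "\<And>h. norm h \<le> m * norm (A \<xi> d h)"
    and sj: "surj (blinfun_apply (A \<xi> d))"
    and var: "\<And>y h. y \<in> ball d (2*r) \<Longrightarrow> norm (A \<xi> y h - A \<xi> d h) \<le> norm h / (2*m)"
    and res: "norm (F \<xi> d) < r / (2*m)"
  shows "dist d (s \<xi>) \<le> r"
proof -
  define T where "T = blinfun_apply (A \<xi> d)"
  have Tlin: "linear T" unfolding T_def by (rule bounded_linear.linear[OF blinfun.bounded_linear_right])
  have injT: "inj T"
  proof (rule injI)
    fix a b assume "T a = T b"
    then have "T (a - b) = 0" using Tlin by (simp add: linear_diff)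
    then have "norm (a - b) \<le> 0" using lb[of "a-b"] unfolding T_def by simp
    then show "a = b" by simp
  qed
  have sjT: "surj T" using sj unfolding T_def .
  define L where "L = inv T"
  have TL: "T (L z) = z" for z unfolding L_def using sjT by (simp add: surj_f_inv_f)
  have LT: "L (T h) = h" for h unfolding L_def using injT by simp
  have Lnorm: "norm (L z) \<le> m * norm z" for z using lb[of "L z"] TL[of z] unfolding T_def by simp
  have Llin: "bounded_linear L"
  proof (rule bounded_linear_intro[where K=m])
    fix x y
    have "L (x + y) = L (T (L x + L y))" using TL linear_add[OF Tlin, of "L x" "L y"] by simp
    then show "L (x + y) = L x + L y" using LT by simp
  next
    fix c x
    have "L (c *\<^sub>R x) = L (T (c *\<^sub>R L x))" using TL linear_scale[OF Tlin, of c "L x"] by simp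
    then show "L (c *\<^sub>R x) = c *\<^sub>R L x" using LT by simp
  next
    fix x show "norm (L x) \<le> norm x * m" using Lnorm[of x] by (simp add: mult.commute)
  qed
  define g where "g y = y - L (F \<xi> y)" for y
  have gd: "(g has_derivative (\<lambda>h. h - L (A \<xi> y h))) (at y)" for y
    unfolding g_def
    by (intro has_derivative_diff has_derivative_ident bounded_linear.has_derivative[OF Llin] F_deriv)
  have gbound: "onorm (\<lambda>h. h - L (A \<xi> y h)) \<le> 1/2" if "y \<in> ball d (2*r)" for y
  proof (rule onorm_bound)
    fix h
    have "h - L (A \<xi> y h) = L (T h - A \<xi> y h)"
      using Llin LT by (simp add: linear_diff bounded_linear.linear)
    also have "norm \<dots> \<le> m * norm (T h - A \<xi> y h)" by (rule Lnorm)
    also have "\<dots> \<le> m * (norm h / (2*m))"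
      using var[OF that, of h] m unfolding T_def by (intro mult_left_mono) (auto simp: norm_minus_commute)
    also have "\<dots> = 1/2 * norm h" using m by simp
    finally show "norm (h - L (A \<xi> y h)) \<le> 1/2 * norm h" .
  qed simp
  have lip: "norm (g x - g y) \<le> 1/2 * norm (x - y)" if "x \<in> cball d r" "y \<in> cball d r" for x y
  proof (rule differentiable_bound[where S="cball d r" and f'="\<lambda>y h. h - L (A \<xi> y h)"])
    show "convex (cball d r)" by simp
    fix x assume "x \<in> cball d r"
    then have "x \<in> ball d (2*r)" using r by (simp add: dist_commute)
    then show "onorm (\<lambda>h. h - L (A \<xi> x h)) \<le> 1/2" by (rule gbound)
  next
    fix x show "(g has_derivative (\<lambda>h. h - L (A \<xi> x h))) (at x within cball d r)"
      by (rule has_derivative_at_withinI[OF gd])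
  qed (use that in auto)
  have gd0: "norm (g d - d) < r/2"
  proof -
    have "norm (g d - d) = norm (L (F \<xi> d))" unfolding g_def by simp
    also have "\<dots> \<le> m * norm (F \<xi> d)" by (rule Lnorm)
    also have "\<dots> < m * (r / (2*m))" by (rule mult_strict_left_mono[OF res m])
    finally show ?thesis using m by simp
  qed
  have maps: "g ` cball d r \<subseteq> cball d r"
  proof
    fix z assume "z \<in> g ` cball d r"
    then obtain y where y: "y \<in> cball d r" "z = g y" by blast
    have "norm (g y - g d) \<le> 1/2 * norm (y - d)" using lip[OF y(1)] r by simp
    also have "\<dots> \<le> r/2" using y(1) by (simp add: dist_norm norm_minus_commute)
    finally have "norm (g y - d) \<le> r" using gd0 norm_triangle_ineq[of "g y - g d" "g d - d"] by simp
    then show "z \<in> cball d r" using y by (simp add: dist_norm norm_minus_commute)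
  qed
  have "\<exists>!x\<in>cball d r. g x = x"
  proof (rule Banach_fix[where c="1/2"])
    show "Topological_Spaces.complete (cball d r)" by (simp add: complete_eq_closed)
    show "cball d r \<noteq> {}" using r by simp
  qed (use maps lip in \<open>auto simp: dist_norm\<close>)
  then obtain x where x: "x \<in> cball d r" "g x = x" by blast
  then have "L (F \<xi> x) = 0" unfolding g_def by simp
  moreover have "F \<xi> x = T (L (F \<xi> x))" using TL by simp
  ultimately have "F \<xi> x = 0" using linear_0[OF Tlin] by simp
  then have "x = s \<xi>" by (rule s_unique)
  then show ?thesis using x by simp
qed


definition CC :: "'x \<Rightarrow> 'y \<Rightarrow> real \<Rightarrow> real \<Rightarrow> bool" where
  "CC \<xi> d r m \<longleftrightarrow>
    (\<forall>j. norm (dY j) \<le> m * norm (A \<xi> d (dY j))) \<and>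
    (\<forall>l q. \<exists>j. norm (A \<xi> d (dY j) - dZ l) < inverse (real (Suc q))) \<and>
    (\<forall>i j. dist (dY i) d < 2*r \<longrightarrow> norm (A \<xi> (dY i) (dY j) - A \<xi> d (dY j)) \<le> norm (dY j) / (2*m)) \<and>
    norm (F \<xi> d) < r / (2*m)"

lemma dense_ext:
  assumes "closed S" "\<And>i. dY i \<in> S"
  shows "x \<in> S"
  using closure_minimal[of "range dY" S] assms dY_dense by auto

lemma Acont_apply: "continuous_on UNIV (\<lambda>y. blinfun_apply (A \<xi> y) h)"
  using A_cont[of \<xi>] by (intro continuous_intros) auto

lemma CC_sound:
  fixes m r :: real
  assumes m: "m > 0" and r: "r > 0" and cc: "CC \<xi> d r m"
  shows "dist d (s \<xi>) \<le> r"
proof (rule FC_sound[OF m r])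
  define T where "T = blinfun_apply (A \<xi> d)"
  have Tc: "continuous_on UNIV T" unfolding T_def by (intro continuous_intros)
  show lb: "norm h \<le> m * norm (A \<xi> d h)" for h
  proof -
    have "h \<in> {h. norm h \<le> m * norm (T h)}"
    proof (rule dense_ext)
      show "closed {h. norm h \<le> m * norm (T h)}"
        by (intro closed_Collect_le continuous_intros Tc)
    qed (use cc in \<open>auto simp: CC_def T_def\<close>)
    then show ?thesis unfolding T_def by simp
  qed
  show "norm (A \<xi> y h - A \<xi> d h) \<le> norm h / (2*m)" if y: "y \<in> ball d (2*r)" for y h
  proof -
    have step1: "y \<in> {y. norm (A \<xi> y (dY j) - T (dY j)) \<le> norm (dY j) / (2*m)}" for j
    proof -
      let ?S = "{y. norm (A \<xi> y (dY j) - T (dY j)) \<le> norm (dY j) / (2*m)}"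
      have cl: "closed ?S" by (intro closed_Collect_le continuous_intros Acont_apply)
      have "ball d (2*r) \<inter> range dY \<subseteq> ?S"
        using cc by (auto simp: CC_def T_def dist_commute)
      then have "closure (ball d (2*r) \<inter> range dY) \<subseteq> ?S" using cl closure_minimal by blast
      moreover have "closure (ball d (2*r) \<inter> range dY) = closure (ball d (2*r))"
        by (rule closure_open_Int_superset) (auto simp: dY_dense)
      ultimately show ?thesis using y closure_subset by blast
    qed
    have "h \<in> {h. norm (A \<xi> y h - T h) \<le> norm h / (2*m)}"
    proof (rule dense_ext)
      show "closed {h. norm (A \<xi> y h - T h) \<le> norm h / (2*m)}"
        by (intro closed_Collect_le continuous_intros Tc) (use m in auto)
    qed (use step1 in auto)
    then show ?thesis unfolding T_def by simp
  qed
  show "norm (F \<xi> d) < r / (2*m)" using cc by (simp add: CC_def)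
  show "surj (blinfun_apply (A \<xi> d))"
  proof -
    have "Topological_Spaces.complete (T ` UNIV)"
    proof (rule complete_isometric_image[where e="1/m"])
      show "0 < 1/m" using m by simp
      show "bounded_linear T" unfolding T_def by (rule blinfun.bounded_linear_right)
      show "\<forall>x\<in>UNIV. 1 / m * norm x \<le> norm (T x)"
        using lb m unfolding T_def by (auto simp: field_simps mult.commute)
    qed (auto simp: complete_UNIV)
    then have clT: "closed (range T)" by (simp add: complete_eq_closed)
    have "dZ l \<in> closure (range T)" for l
      unfolding closure_approachable
    proof (intro allI impI)
      fix e :: real assume "e > 0"
      then obtain q where q: "inverse (real (Suc q)) < e" using reals_Archimedean by blast
      obtain j where "norm (A \<xi> d (dY j) - dZ l) < inverse (real (Suc q))"
        using cc unfolding CC_def by blast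
      then show "\<exists>y\<in>range T. dist y (dZ l) < e" using q unfolding T_def dist_norm
        by (intro bexI[of _ "A \<xi> d (dY j)"]) auto
    qed
    then have "range dZ \<subseteq> range T" using clT by (simp add: closure_closed image_subset_iff)
    then have "closure (range dZ) \<subseteq> range T" using clT closure_minimal by blast
    then show ?thesis using dZ_dense unfolding T_def by auto
  qed
qed


lemma CC_complete: "\<exists>i mm k. n \<le> k \<and> CC \<xi> (dY i) (inverse (real (Suc k))) (real (Suc mm))"
proof -
  define ys where "ys = s \<xi>"
  define Ts where "Ts = A \<xi> ys"
  obtain L :: "'z \<Rightarrow>\<^sub>L 'y" where LT: "\<And>y. L (Ts y) = y" and TL: "\<And>z. Ts (L z) = z"
    using A_inv[of \<xi>] unfolding Ts_def ys_def by blast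
  define m0 where "m0 = norm L + 1"
  have m0: "m0 \<ge> 1" unfolding m0_def by simp
  have Lm0: "norm (L z) \<le> m0 * norm z" for z
  proof -
    have "norm (L z) \<le> norm L * norm z" by (rule norm_blinfun)
    also have "\<dots> \<le> (norm L + 1) * norm z" by (intro mult_right_mono) auto
    finally show ?thesis unfolding m0_def .
  qed
  have lb0: "norm h \<le> m0 * norm (Ts h)" for h using Lm0[of "Ts h"] LT[of h] by simp
  obtain mm where mm: "2 * m0 < real mm" using reals_Archimedean2 by blast
  define m where "m = real (Suc mm)"
  have m: "2 * m0 \<le> m" "m > 0" using mm unfolding m_def by auto
  define e0 where "e0 = 1 / (4*m)"
  have e0: "e0 > 0" "m0 * e0 \<le> 1/8" using m m0 unfolding e0_def by (auto simp: field_simps)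
  obtain \<delta> where \<delta>: "\<delta> > 0" "\<And>y. dist y ys < \<delta> \<Longrightarrow> dist (A \<xi> y) Ts < e0"
    using A_cont[of \<xi>] e0(1) unfolding continuous_on_iff Ts_def by blast
  have Aclose: "norm (A \<xi> y h - Ts h) \<le> e0 * norm h" if "dist y ys < \<delta>" for y h
  proof -
    have "norm (A \<xi> y h - Ts h) = norm ((A \<xi> y - Ts) h)" by (simp add: blinfun.diff_left)
    also have "\<dots> \<le> norm (A \<xi> y - Ts) * norm h" by (rule norm_blinfun)
    also have "\<dots> \<le> e0 * norm h" using \<delta>(2)[OF that] by (simp add: dist_norm mult_right_mono)
    finally show ?thesis .
  qed
  obtain k0 where k0: "inverse (real (Suc k0)) < \<delta>/4" using reals_Archimedean[of "\<delta>/4"] \<delta>(1) by auto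
  define k where "k = k0 + n"
  define r where "r = inverse (real (Suc k))"
  have "inverse (real (Suc k)) \<le> inverse (real (Suc k0))" unfolding k_def
    by (intro le_imp_inverse_le) auto
  then have r: "r > 0" "r < \<delta>/4" unfolding r_def using k0 by (simp, linarith)
  have "continuous (at ys) (F \<xi>)" using has_derivative_continuous[OF F_deriv] by simp
  moreover have "r / (2*m) > 0" using r m by simp
  ultimately obtain \<delta>' where \<delta>': "\<delta>' > 0" "\<And>y. dist y ys < \<delta>' \<Longrightarrow> dist (F \<xi> y) (F \<xi> ys) < r / (2*m)"
    unfolding continuous_at_eps_delta by blast
  have "ys \<in> closure (range dY)" using dY_dense by simp
  moreover have "min (\<delta>/2) \<delta>' > 0" using \<delta>(1) \<delta>'(1) by simp
  ultimately obtain yy where "yy \<in> range dY" "dist yy ys < min (\<delta>/2) \<delta>'"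
    unfolding closure_approachable by blast
  then obtain i where i: "dist (dY i) ys < min (\<delta>/2) \<delta>'" by blast
  define d where "d = dY i"
  define Td where "Td = A \<xi> d"
  have dd: "dist d ys < \<delta>" using i \<delta>(1) unfolding d_def by simp
  have CCa: "norm h \<le> m * norm (Td h)" for h
  proof -
    have a1: "norm (Ts h) \<le> norm (Td h) + e0 * norm h"
      using Aclose[OF dd, of h] norm_triangle_ineq2[of "Ts h" "Td h"] unfolding Td_def
      by (simp add: norm_minus_commute)
    have "norm h \<le> m0 * norm (Td h) + m0 * e0 * norm h"
      using lb0[of h] mult_left_mono[OF a1, of m0] m0 by (simp add: distrib_left)
    also have "\<dots> \<le> m0 * norm (Td h) + 1/8 * norm h"
      using mult_right_mono[OF e0(2) norm_ge_zero] by simp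
    finally have "norm h \<le> 8/7 * m0 * norm (Td h)" by simp
    also have "\<dots> \<le> m * norm (Td h)" using m m0 by (intro mult_right_mono) auto
    finally show ?thesis .
  qed
  have surjTd: "\<exists>h. Td h = z" for z
  proof -
    define f where "f h = L z + h - L (Td h)" for h
    have "\<exists>!h. f h = h"
    proof (rule banach_fix_type[where c="1/8"])
      show "\<forall>x y. dist (f x) (f y) \<le> 1/8 * dist x y"
      proof (intro allI)
        fix x y
        have e1: "L (Ts (x - y) - Td (x - y)) = (x - y) - (L (Td x) - L (Td y))"
          by (simp add: blinfun.diff_right LT)
        have "f x - f y = L (Ts (x - y) - Td (x - y))"
          unfolding e1 f_def by (simp add: algebra_simps)
        then have "dist (f x) (f y) = norm (L (Ts (x - y) - Td (x - y)))" by (simp add: dist_norm)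
        also have "\<dots> \<le> m0 * norm (Ts (x - y) - Td (x - y))" by (rule Lm0)
        also have "\<dots> \<le> m0 * (e0 * norm (x - y))"
          using Aclose[OF dd, of "x - y"] m0 unfolding Td_def by (simp add: norm_minus_commute)
        also have "\<dots> \<le> 1/8 * norm (x - y)"
          using mult_right_mono[OF e0(2) norm_ge_zero, of "x - y"] by simp
        finally show "dist (f x) (f y) \<le> 1/8 * dist x y" by (simp add: dist_norm)
      qed
    qed auto
    then obtain h where "f h = h" by blast
    then have "L (Td h) = L z" unfolding f_def by (simp add: algebra_simps)
    then have "Ts (L (Td h)) = Ts (L z)" by simp
    then show ?thesis using TL by auto
  qed
  have CCb: "\<exists>j. norm (Td (dY j) - dZ l) < inverse (real (Suc q))" for l q
  proof -
    obtain h where h: "Td h = dZ l" using surjTd by blast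
    define e where "e = inverse (real (Suc q)) / (norm Td + 1)"
    have nT: "norm Td + 1 > 0" using norm_ge_zero[of Td] by linarith
    have e: "e > 0" unfolding e_def using nT by (intro divide_pos_pos) auto
    have "h \<in> closure (range dY)" using dY_dense by simp
    then obtain j where j: "dist (dY j) h < e" unfolding closure_approachable using e by blast
    have "norm (Td (dY j) - dZ l) = norm (Td (dY j - h))" using h by (simp add: blinfun.diff_right)
    also have "\<dots> \<le> norm Td * norm (dY j - h)" by (rule norm_blinfun)
    also have "\<dots> \<le> (norm Td + 1) * norm (dY j - h)" by (simp add: mult_right_mono)
    also have "\<dots> < (norm Td + 1) * e" using j nT by (intro mult_strict_left_mono) (auto simp: dist_norm)
    also have "\<dots> = inverse (real (Suc q))" unfolding e_def using nT by simp
    finally show ?thesis by blast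
  qed
  have CCc: "norm (A \<xi> (dY i') v - Td v) \<le> norm v / (2*m)" if "dist (dY i') d < 2*r" for i' v
  proof -
    have "dist (dY i') ys \<le> dist (dY i') d + dist d ys" by (rule dist_triangle)
    also have "\<dots> < \<delta>" using that r i unfolding d_def by simp
    finally have y: "dist (dY i') ys < \<delta>" .
    have "norm (A \<xi> (dY i') v - Td v) \<le> norm (A \<xi> (dY i') v - Ts v) + norm (Td v - Ts v)"
      using norm_triangle_ineq4[of "A \<xi> (dY i') v - Ts v" "Td v - Ts v"] by simp
    also have "\<dots> \<le> e0 * norm v + e0 * norm v"
      using Aclose[OF y, of v] Aclose[OF dd, of v] unfolding Td_def by simp
    also have "\<dots> = norm v / (2*m)" unfolding e0_def using m by (simp add: field_simps)
    finally show ?thesis .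
  qed
  have CCd: "norm (F \<xi> d) < r / (2*m)"
    using \<delta>'(2)[of d] i s_zero[of \<xi>] unfolding d_def ys_def by simp
  have "CC \<xi> (dY i) r m"
    unfolding CC_def using CCa CCb CCc CCd unfolding d_def Td_def by blast
  then show ?thesis unfolding r_def m_def k_def by (intro exI[of _ i] exI[of _ mm] exI[of _ "k0+n"]) simp
qed


lemma A_meas[measurable]: "(\<lambda>\<xi>. blinfun_apply (A \<xi> y) h) \<in> borel_measurable M"
  by (rule deriv_meas[OF F_deriv F_meas])

lemma F_meas'[measurable]: "(\<lambda>\<xi>. F \<xi> y) \<in> borel_measurable M"
  by (rule F_meas)

lemma pred_le_real: "f \<in> borel_measurable M \<Longrightarrow> g \<in> borel_measurable M \<Longrightarrow> Measurable.pred M (\<lambda>x. f x \<le> (g x :: real))"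
  unfolding pred_def by (rule borel_measurable_le)

lemma pred_less_real: "f \<in> borel_measurable M \<Longrightarrow> g \<in> borel_measurable M \<Longrightarrow> Measurable.pred M (\<lambda>x. f x < (g x :: real))"
  unfolding pred_def by (rule borel_measurable_less)

lemma pred_const_bool: "Measurable.pred M (\<lambda>x. K)"
  by simp

lemma CC_meas[measurable]: "Measurable.pred M (\<lambda>\<xi>. CC \<xi> d r m)"
proof -
  have f1: "(\<lambda>\<xi>. norm (A \<xi> y h - A \<xi> d h)) \<in> borel_measurable M" for y h
    by measurable
  have f2: "(\<lambda>\<xi>. norm (A \<xi> d h - z)) \<in> borel_measurable M" for h z
    by measurable
  have f3: "(\<lambda>\<xi>. m * norm (A \<xi> d h)) \<in> borel_measurable M" for h
    by measurable
  have f4: "(\<lambda>\<xi>. norm (F \<xi> d)) \<in> borel_measurable M"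
    by measurable
  show ?thesis
    unfolding CC_def
    by (intro pred_intros_logic(3) pred_intros_logic(4) pred_intros_countable
          pred_le_real pred_less_real pred_const_bool f1 f2 f3 f4 borel_measurable_const)
qed

definition Q :: "nat \<Rightarrow> nat \<Rightarrow> 'x \<Rightarrow> bool" where
  "Q n j \<xi> = (case (from_nat j :: nat \<times> nat \<times> nat) of (i, mm, k) \<Rightarrow>
       n \<le> k \<and> CC \<xi> (dY i) (inverse (real (Suc k))) (real (Suc mm)))"

lemma Q_meas[measurable]: "Measurable.pred M (Q n j)"
proof -
  obtain i mm k where e: "(from_nat j :: nat \<times> nat \<times> nat) = (i, mm, k)" by (cases "from_nat j :: nat \<times> nat \<times> nat") auto
  have "Q n j = (\<lambda>\<xi>. n \<le> k \<and> CC \<xi> (dY i) (inverse (real (Suc k))) (real (Suc mm)))"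
    unfolding Q_def e by simp
  then show ?thesis by (simp only:) (intro pred_intros_logic(3) pred_const_bool CC_meas)
qed

definition yseq :: "nat \<Rightarrow> 'x \<Rightarrow> 'y" where
  "yseq n \<xi> = dY (fst (from_nat (LEAST j. Q n j \<xi>) :: nat \<times> nat \<times> nat))"

lemma yseq_dist: "dist (yseq n \<xi>) (s \<xi>) \<le> inverse (real (Suc n))"
proof -
  obtain i mm k where c: "n \<le> k" "CC \<xi> (dY i) (inverse (real (Suc k))) (real (Suc mm))"
    using CC_complete by blast
  have "Q n (to_nat (i, mm, k)) \<xi>" unfolding Q_def using c by simp
  then have "Q n (LEAST j. Q n j \<xi>) \<xi>" by (rule LeastI)
  then obtain i' mm' k' where e: "(from_nat (LEAST j. Q n j \<xi>) :: nat \<times> nat \<times> nat) = (i', mm', k')"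
    and c': "n \<le> k'" "CC \<xi> (dY i') (inverse (real (Suc k'))) (real (Suc mm'))"
    unfolding Q_def by (cases "from_nat (LEAST j. Q n j \<xi>) :: nat \<times> nat \<times> nat") auto
  have "dist (dY i') (s \<xi>) \<le> inverse (real (Suc k'))"
    by (rule CC_sound[OF _ _ c'(2)]) auto
  also have "\<dots> \<le> inverse (real (Suc n))" using c'(1) by (intro le_imp_inverse_le) auto
  finally show ?thesis unfolding yseq_def e by simp
qed

lemma yseq_lim: "(\<lambda>n. yseq n \<xi>) \<longlonglongrightarrow> s \<xi>"
proof -
  have e1: "eventually (\<lambda>n. 0 \<le> dist (yseq n \<xi>) (s \<xi>)) sequentially" by simp
  have e2: "eventually (\<lambda>n. dist (yseq n \<xi>) (s \<xi>) \<le> inverse (real (Suc n))) sequentially"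
    using yseq_dist by (intro always_eventually) blast
  have "(\<lambda>n. dist (yseq n \<xi>) (s \<xi>)) \<longlonglongrightarrow> 0"
    by (rule tendsto_sandwich[OF e1 e2 tendsto_const LIMSEQ_inverse_real_of_nat])
  then show ?thesis using tendsto_dist_iff by blast
qed

theorem comp_meas:
  fixes J :: "'y \<Rightarrow> 'x \<Rightarrow> real"
  assumes J_cont: "\<And>\<xi>. continuous_on UNIV (\<lambda>y. J y \<xi>)"
    and J_meas: "\<And>y. (\<lambda>\<xi>. J y \<xi>) \<in> borel_measurable M"
  shows "(\<lambda>\<xi>. J (s \<xi>) \<xi>) \<in> borel_measurable M"
proof (rule borel_measurable_LIMSEQ_metric)
  fix n
  show "(\<lambda>\<xi>. J (yseq n \<xi>) \<xi>) \<in> borel_measurable M"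
    unfolding yseq_def
  proof (rule measurable_compose_countable'[where f="\<lambda>j \<xi>. J (dY (fst (from_nat j :: nat \<times> nat \<times> nat))) \<xi>" and I=UNIV])
    show "(\<lambda>\<xi>. LEAST j. Q n j \<xi>) \<in> measurable M (count_space UNIV)"
      by measurable
  qed (auto intro: J_meas)
next
  fix \<xi>
  have "isCont (\<lambda>y. J y \<xi>) (s \<xi>)" using J_cont[of \<xi>] by (simp add: continuous_on_eq_continuous_at)
  then show "(\<lambda>n. J (yseq n \<xi>) \<xi>) \<longlonglongrightarrow> J (s \<xi>) \<xi>"
    using isCont_tendsto_compose[OF _ yseq_lim] by blast
qed

end

lemma dense_seq_exists:
  "\<exists>d :: nat \<Rightarrow> 'a::{metric_space,second_countable_topology}. closure (range d) = UNIV"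
proof -
  obtain D :: "'a set" where D: "countable D" "\<And>X. open X \<Longrightarrow> X \<noteq> {} \<Longrightarrow> \<exists>d\<in>D. d \<in> X"
    using countable_dense_exists by blast
  have ne: "D \<noteq> {}" using D(2)[of UNIV] by auto
  have "closure D = UNIV"
  proof -
    have "x \<in> closure D" for x
      unfolding closure_approachable
    proof (intro allI impI)
      fix e :: real assume "e > 0"
      then obtain d where "d \<in> D" "d \<in> ball x e" using D(2)[of "ball x e"] by auto
      then show "\<exists>y\<in>D. dist y x < e" by (auto simp: dist_commute)
    qed
    then show ?thesis by auto
  qed
  then show ?thesis using ne D(1) by (intro exI[of _ "from_nat_into D"]) simp
qed

lemma hat_meas:
  fixes J1 :: "'y::{banach,second_countable_topology} \<Rightarrow> 'x \<Rightarrow> real"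
    and E :: "'y \<Rightarrow> 'u::real_normed_vector \<Rightarrow> 'x \<Rightarrow> 'z::{banach,second_countable_topology}"
    and DE :: "'x \<Rightarrow> 'y \<times> 'u \<Rightarrow> (('y \<times> 'u) \<Rightarrow>\<^sub>L 'z)"
    and S :: "'u \<Rightarrow> 'x \<Rightarrow> 'y"
  assumes J1_cont: "\<forall>\<xi>. continuous_on UNIV (\<lambda>y. J1 y \<xi>)"
    and J1_meas: "\<forall>y. (\<lambda>\<xi>. J1 y \<xi>) \<in> borel_measurable P"
    and E_meas: "\<forall>y u. (\<lambda>\<xi>. E y u \<xi>) \<in> borel_measurable P"
    and E_deriv: "\<forall>\<xi> p. ((\<lambda>(y, u). E y u \<xi>) has_derivative blinfun_apply (DE \<xi> p)) (at p)"
    and E_deriv_cont: "\<forall>\<xi>. continuous_on UNIV (DE \<xi>)"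
    and S_sol: "\<forall>u \<xi>. E (S u \<xi>) u \<xi> = 0 \<and> (\<forall>y. E y u \<xi> = 0 \<longrightarrow> y = S u \<xi>)"
    and Ey_inv: "\<forall>u \<xi>. \<exists>L :: 'z \<Rightarrow>\<^sub>L 'y.
        (\<forall>y. blinfun_apply L (blinfun_apply (DE \<xi> (S u \<xi>, u)) (y, 0)) = y) \<and>
        (\<forall>z. blinfun_apply (DE \<xi> (S u \<xi>, u)) (blinfun_apply L z, 0) = z)"
  shows "(\<lambda>\<xi>. J1 (S u \<xi>) \<xi>) \<in> borel_measurable P"
proof -
  obtain dY :: "nat \<Rightarrow> 'y" where dY: "closure (range dY) = UNIV" using dense_seq_exists by blast
  obtain dZ :: "nat \<Rightarrow> 'z" where dZ: "closure (range dZ) = UNIV" using dense_seq_exists by blast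
  have blI: "bounded_linear (\<lambda>h::'y. (h, 0::'u))"
    by (intro bounded_linear_Pair bounded_linear_ident bounded_linear_zero)
  define Ai :: "'y \<Rightarrow>\<^sub>L ('y \<times> 'u)" where "Ai = Blinfun (\<lambda>h. (h, 0))"
  have Ai: "blinfun_apply Ai h = (h, 0)" for h unfolding Ai_def using blI by (simp add: bounded_linear_Blinfun_apply)
  interpret I: impl_meas "\<lambda>\<xi> (y::'y). E y u \<xi>" "\<lambda>\<xi> (y::'y). DE \<xi> (y, u) o\<^sub>L Ai" "\<lambda>\<xi>. S u \<xi>" P dY dZ
  proof
    fix \<xi> and y :: 'y
    have d1: "((\<lambda>y. (y, u)) has_derivative (\<lambda>h. (h, 0))) (at y)"
      by (intro derivative_eq_intros) auto
    have "((\<lambda>y. (\<lambda>(y, u). E y u \<xi>) (y, u)) has_derivative (\<lambda>h. DE \<xi> (y, u) (h, 0))) (at y)"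
      using has_derivative_compose[OF d1 spec[OF spec[OF E_deriv, of \<xi>], of "(y,u)"]] by simp
    moreover have "blinfun_apply (DE \<xi> (y, u) o\<^sub>L Ai) = (\<lambda>h. DE \<xi> (y, u) (h, 0))"
      by (rule ext) (simp add: Ai)
    ultimately show "((\<lambda>y. E y u \<xi>) has_derivative blinfun_apply (DE \<xi> (y, u) o\<^sub>L Ai)) (at y)"
      by simp
  next
    fix \<xi>
    have c1: "continuous_on UNIV (\<lambda>y::'y. DE \<xi> (y, u))"
    proof (rule continuous_on_compose2[of UNIV "DE \<xi>"])
      show "continuous_on UNIV (DE \<xi>)" using E_deriv_cont by blast
      show "continuous_on UNIV (\<lambda>y::'y. (y, u))"
        by (intro continuous_on_Pair continuous_on_id continuous_on_const)
    qed simp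
    show "continuous_on UNIV (\<lambda>y. DE \<xi> (y, u) o\<^sub>L Ai)"
      by (intro continuous_intros c1)
  next
    fix y show "(\<lambda>\<xi>. E y u \<xi>) \<in> borel_measurable P" using E_meas by blast
  next
    fix \<xi> show "E (S u \<xi>) u \<xi> = 0" using S_sol by blast
  next
    fix \<xi> y assume "E y u \<xi> = 0" then show "y = S u \<xi>" using S_sol by blast
  next
    fix \<xi> show "\<exists>L::'z \<Rightarrow>\<^sub>L 'y. (\<forall>y. L ((DE \<xi> (S u \<xi>, u) o\<^sub>L Ai) y) = y) \<and> (\<forall>z. (DE \<xi> (S u \<xi>, u) o\<^sub>L Ai) (L z) = z)"
    proof -
      obtain L :: "'z \<Rightarrow>\<^sub>L 'y" where L: "\<forall>y. L (DE \<xi> (S u \<xi>, u) (y, 0)) = y"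
          "\<forall>z. DE \<xi> (S u \<xi>, u) (L z, 0) = z"
        using Ey_inv by blast
      show ?thesis using L by (intro exI[of _ L]) (simp add: Ai)
    qed
  next
    show "closure (range dY) = UNIV" by (rule dY)
  next
    show "closure (range dZ) = UNIV" by (rule dZ)
  qed
  show ?thesis
  proof (rule I.comp_meas)
    fix \<xi> show "continuous_on UNIV (\<lambda>y. J1 y \<xi>)" using J1_cont by blast
  next
    fix y show "(\<lambda>\<xi>. J1 y \<xi>) \<in> borel_measurable P" using J1_meas by blast
  qed
qed

theorem mainTheorem5:
  fixes J1 :: "'y::{banach,second_countable_topology} \<Rightarrow> 'x::polish_space \<Rightarrow> real"
    and DJ1 :: "'x \<Rightarrow> 'y \<Rightarrow> ('y \<Rightarrow>\<^sub>L real)"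
    and \<alpha> :: real
    and \<psi> :: "'u::{real_inner,complete_space,second_countable_topology} \<Rightarrow> ennreal"
    and E :: "'y \<Rightarrow> 'u \<Rightarrow> 'x \<Rightarrow> 'z::{banach,second_countable_topology}"
    and DE :: "'x \<Rightarrow> 'y \<times> 'u \<Rightarrow> (('y \<times> 'u) \<Rightarrow>\<^sub>L 'z)"
    and S :: "'u \<Rightarrow> 'x \<Rightarrow> 'y"
    and P :: "'x measure"
    and u0 :: 'u and \<rho> :: real
    and Vad W :: "'u set"
    and K :: "'v::{banach,second_countable_topology} \<Rightarrow> 'u"
    and B :: "'u set"
    and M :: "'u \<Rightarrow> 'x \<Rightarrow> 'v"
    and \<zeta> :: "'x \<Rightarrow> real"
  assumes P_prob: "prob_space P" and P_sets: "sets P = sets borel"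
    \<comment> \<open>(A1)\<close>
    and J1_nonneg: "\<forall>y \<xi>. 0 \<le> J1 y \<xi>"
    and J1_cont: "\<forall>\<xi>. continuous_on UNIV (\<lambda>y. J1 y \<xi>)"
    and J1_meas: "\<forall>y. (\<lambda>\<xi>. J1 y \<xi>) \<in> borel_measurable P"
    and J1_deriv: "\<forall>\<xi> y. ((\<lambda>y. J1 y \<xi>) has_derivative blinfun_apply (DJ1 \<xi> y)) (at y)"
    and J1_deriv_cont: "\<forall>\<xi>. continuous_on UNIV (DJ1 \<xi>)"
    and alpha_pos: "\<alpha> > 0"
    and psi_proper: "proper_enn \<psi>" and psi_convex: "convex_enn \<psi>" and psi_lsc: "lsc_enn \<psi>"
    \<comment> \<open>(A2)\<close>
    and E_cont: "\<forall>\<xi>. continuous_on UNIV (\<lambda>(y, u). E y u \<xi>)"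
    and E_meas: "\<forall>y u. (\<lambda>\<xi>. E y u \<xi>) \<in> borel_measurable P"
    and E_deriv: "\<forall>\<xi> p. ((\<lambda>(y, u). E y u \<xi>) has_derivative blinfun_apply (DE \<xi> p)) (at p)"
    and E_deriv_cont: "\<forall>\<xi>. continuous_on UNIV (DE \<xi>)"
    and S_sol: "\<forall>u \<xi>. E (S u \<xi>) u \<xi> = 0 \<and> (\<forall>y. E y u \<xi> = 0 \<longrightarrow> y = S u \<xi>)"
    and Ey_inv: "\<forall>u \<xi>. \<exists>L :: 'z \<Rightarrow>\<^sub>L 'y.
        (\<forall>y. blinfun_apply L (blinfun_apply (DE \<xi> (S u \<xi>, u)) (y, 0)) = y) \<and>
        (\<forall>z. blinfun_apply (DE \<xi> (S u \<xi>, u)) (blinfun_apply L z, 0) = z)"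
    \<comment> \<open>u0, \<rho>, V_ad^\<rho>(u0)\<close>
    and u0_ad: "\<psi> u0 < \<infinity>"
    and u0_fin: "(\<integral>\<^sup>+ \<xi>. ennreal (J1 (S u0 \<xi>) \<xi>) + \<psi> u0 + ennreal (\<alpha> / 2 * (norm u0)\<^sup>2) \<partial>P) < \<infinity>"
    and rho_pos: "\<rho> > 0"
    and Vad_def: "Vad = {u. \<psi> u < \<infinity> \<and>
        ennreal (\<alpha> / 2 * (norm u)\<^sup>2)
          \<le> (\<integral>\<^sup>+ \<xi>. ennreal (J1 (S u0 \<xi>) \<xi>) + \<psi> u0 + ennreal (\<alpha> / 2 * (norm u0)\<^sup>2) \<partial>P) + ennreal \<rho>}"
    \<comment> \<open>(A4)\<close>
    and K_compact: "compact_operator K"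
    and B_bounded: "bounded B" and B_convex: "convex B" and B_open: "open B"
    and Vad_B: "Vad \<subseteq> B"
    and M_cont: "\<forall>\<xi>. continuous_on UNIV (\<lambda>u. M u \<xi>)"
    and M_meas: "\<forall>u. (\<lambda>\<xi>. M u \<xi>) \<in> borel_measurable P"
    and grad: "\<forall>u \<xi>. ((\<lambda>w. J1 (S w \<xi>) \<xi>) has_derivative (\<lambda>h. inner (K (M u \<xi>)) h)) (at u)"
    and zeta_int: "integrable P \<zeta>" and zeta_nonneg: "\<forall>\<xi>. 0 \<le> \<zeta> \<xi>"
    and M_bound: "\<forall>u\<in>B. \<forall>\<xi>. norm (M u \<xi>) \<le> \<zeta> \<xi>"
    and W_def: "W = Vad \<inter> closure {prox_enn (\<lambda>w. \<psi> w / ennreal \<alpha>) (- (1 / \<alpha>) *\<^sub>R K v) | v.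
                                   norm v \<le> (\<integral>\<xi>. \<zeta> \<xi> \<partial>P) + \<rho>}"
  shows "(\<forall>\<xi>. continuous_on W (\<lambda>u. J1 (S u \<xi>) \<xi>)) \<and>
         (\<forall>u\<in>W. (\<lambda>\<xi>. J1 (S u \<xi>) \<xi>) \<in> borel_measurable P) \<and>
         (\<exists>h. integrable P h \<and> (\<forall>\<xi>. 0 \<le> h \<xi>) \<and> (\<forall>u\<in>W. \<forall>\<xi>. J1 (S u \<xi>) \<xi> \<le> h \<xi>))"
proof -
  have meas: "\<And>u. (\<lambda>\<xi>. J1 (S u \<xi>) \<xi>) \<in> borel_measurable P"
    by (rule hat_meas[OF J1_cont J1_meas E_meas E_deriv E_deriv_cont S_sol Ey_inv])
  have cont: "\<forall>\<xi>. continuous_on W (\<lambda>u. J1 (S u \<xi>) \<xi>)"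
  proof
    fix \<xi>
    have "isCont (\<lambda>u. J1 (S u \<xi>) \<xi>) u" for u
      using has_derivative_continuous[OF spec[OF spec[OF grad, of u], of \<xi>]] by simp
    then show "continuous_on W (\<lambda>u. J1 (S u \<xi>) \<xi>)" by (intro continuous_at_imp_continuous_on) auto
  qed
  have Klin: "linear K" using K_compact unfolding compact_operator_def by blast
  have "bounded (closure (K ` cball 0 1))"
    using K_compact unfolding compact_operator_def by (intro compact_imp_bounded) auto
  then have "bounded (K ` cball 0 1)" using bounded_subset closure_subset by blast
  then obtain C where C: "C > 0" "\<And>x. x \<in> cball 0 1 \<Longrightarrow> norm (K x) \<le> C"
    unfolding bounded_pos by blast
  have Knorm: "norm (K v) \<le> C * norm v" for v
  proof (cases "v = 0")
    case True then show ?thesis using Klin by (simp add: linear_0)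
  next
    case False
    define w where "w = v /\<^sub>R norm v"
    have w: "norm w = 1" unfolding w_def using False by simp
    have "v = norm v *\<^sub>R w" unfolding w_def using False by simp
    then have "K v = K (norm v *\<^sub>R w)" by simp
    also have "\<dots> = norm v *\<^sub>R K w" by (rule linear_scale[OF Klin])
    finally have "K v = norm v *\<^sub>R K w" .
    then have "norm (K v) = norm v * norm (K w)" by simp
    also have "\<dots> \<le> norm v * C" using C(2)[of w] w by (intro mult_left_mono) auto
    finally show ?thesis by (simp add: mult.commute)
  qed
  obtain R where R: "R > 0" "\<And>x. x \<in> B \<Longrightarrow> norm x \<le> R"
    using B_bounded unfolding bounded_pos by blast
  define I where "I = (\<integral>\<^sup>+ \<xi>. ennreal (J1 (S u0 \<xi>) \<xi>) + \<psi> u0 + ennreal (\<alpha> / 2 * (norm u0)\<^sup>2) \<partial>P)"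
  have "ennreal (\<alpha> / 2 * (norm u0)\<^sup>2) = (\<integral>\<^sup>+ \<xi>. ennreal (\<alpha> / 2 * (norm u0)\<^sup>2) \<partial>P)"
    using prob_space.emeasure_space_1[OF P_prob] by simp
  also have "\<dots> \<le> I" unfolding I_def
    by (intro nn_integral_mono add_increasing) auto
  also have "\<dots> \<le> I + ennreal \<rho>" by simp
  finally have "u0 \<in> Vad" using u0_ad unfolding Vad_def I_def by simp
  then have u0B: "u0 \<in> B" using Vad_B by blast
  have WB: "W \<subseteq> B" using Vad_B W_def by blast
  define h where "h \<xi> = J1 (S u0 \<xi>) \<xi> + 2 * R * C * \<zeta> \<xi>" for \<xi>
  have bound: "J1 (S u \<xi>) \<xi> \<le> h \<xi>" if u: "u \<in> W" for u \<xi>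
  proof -
    have uB: "u \<in> B" using u WB by blast
    have "norm (J1 (S u \<xi>) \<xi> - J1 (S u0 \<xi>) \<xi>) \<le> (C * \<zeta> \<xi>) * norm (u - u0)"
    proof (rule differentiable_bound[where S=B and f'="\<lambda>w h. inner (K (M w \<xi>)) h" and f="\<lambda>w. J1 (S w \<xi>) \<xi>" and x=u and y=u0])
      show "convex B" by (rule B_convex)
      fix x assume x: "x \<in> B"
      show "((\<lambda>w. J1 (S w \<xi>) \<xi>) has_derivative (\<lambda>h. inner (K (M x \<xi>)) h)) (at x within B)"
        by (rule has_derivative_at_withinI[OF spec[OF spec[OF grad, of x], of \<xi>]])
      show "onorm (\<lambda>h. inner (K (M x \<xi>)) h) \<le> C * \<zeta> \<xi>"
      proof (rule onorm_bound)
        show "0 \<le> C * \<zeta> \<xi>" using C zeta_nonneg by simp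
        fix v
        have "norm (inner (K (M x \<xi>)) v) \<le> norm (K (M x \<xi>)) * norm v"
          using Cauchy_Schwarz_ineq2[of "K (M x \<xi>)" v] by simp
        also have "\<dots> \<le> (C * \<zeta> \<xi>) * norm v"
        proof (intro mult_right_mono)
          have "norm (K (M x \<xi>)) \<le> C * norm (M x \<xi>)" by (rule Knorm)
          also have "\<dots> \<le> C * \<zeta> \<xi>" using M_bound x C by (intro mult_left_mono) auto
          finally show "norm (K (M x \<xi>)) \<le> C * \<zeta> \<xi>" .
        qed simp
        finally show "norm (inner (K (M x \<xi>)) v) \<le> C * \<zeta> \<xi> * norm v" .
      qed
    qed (use uB u0B in auto)
    moreover have "norm (u - u0) \<le> 2 * R"
      using norm_triangle_ineq4[of u u0] R(2)[OF uB] R(2)[OF u0B] by simp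
    moreover have "0 \<le> C * \<zeta> \<xi>" using C zeta_nonneg by simp
    ultimately have "norm (J1 (S u \<xi>) \<xi> - J1 (S u0 \<xi>) \<xi>) \<le> (C * \<zeta> \<xi>) * (2 * R)"
      using mult_left_mono[of "norm (u - u0)" "2 * R" "C * \<zeta> \<xi>"] by linarith
    then have "J1 (S u \<xi>) \<xi> - J1 (S u0 \<xi>) \<xi> \<le> (C * \<zeta> \<xi>) * (2 * R)"
      by (simp add: abs_le_iff)
    then show ?thesis unfolding h_def by (simp add: algebra_simps)
  qed
  have intJ0: "integrable P (\<lambda>\<xi>. J1 (S u0 \<xi>) \<xi>)"
  proof (rule integrableI_nonneg)
    show "(\<lambda>\<xi>. J1 (S u0 \<xi>) \<xi>) \<in> borel_measurable P" by (rule meas)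
    show "AE x in P. 0 \<le> J1 (S u0 x) x" using J1_nonneg by simp
    have "(\<integral>\<^sup>+ \<xi>. ennreal (J1 (S u0 \<xi>) \<xi>) \<partial>P) \<le> I"
      unfolding I_def by (intro nn_integral_mono) (simp add: add.assoc add_increasing2)
    then show "(\<integral>\<^sup>+ \<xi>. ennreal (J1 (S u0 \<xi>) \<xi>) \<partial>P) < \<infinity>" using u0_fin unfolding I_def by simp
  qed
  have inth: "integrable P h" unfolding h_def
    by (intro Bochner_Integration.integrable_add intJ0 integrable_mult_right zeta_int)
  have hpos: "0 \<le> h \<xi>" for \<xi>
  proof -
    have "0 \<le> J1 (S u0 \<xi>) \<xi>" using J1_nonneg by blast
    moreover have "0 \<le> 2 * R * C * \<zeta> \<xi>" using zeta_nonneg R(1) C(1) by simp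
    ultimately show ?thesis unfolding h_def by linarith
  qed
  have ex: "\<exists>h. integrable P h \<and> (\<forall>\<xi>. 0 \<le> h \<xi>) \<and> (\<forall>u\<in>W. \<forall>\<xi>. J1 (S u \<xi>) \<xi> \<le> h \<xi>)"
    by (rule exI[of _ h]) (intro conjI allI ballI inth hpos bound; assumption)
  have m2: "\<forall>u\<in>W. (\<lambda>\<xi>. J1 (S u \<xi>) \<xi>) \<in> borel_measurable P"
    using meas by blast
  show ?thesis by (intro conjI cont m2 ex)
qed

end
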